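(* Let $\Sigma$ be a $(\mathbf d,\mathbf z)$-cluster pattern with principal coefficients. Then every $y$-variable $y^t_i\in\mathrm{Trop}(\mathbf y,\mathbf z)$ of $\Sigma$ is a Laurent monomial in $y_1,\dots,y_n$ alone (with coefficient $1$), i.e. none of the variables $z_{i,s}$ occurs in it.
   Context: $[a]_+=\max(a,0)$. Mutation data: positive integers $\mathbf d=(d_1,\dots,d_n)$ and frozen coefficients $z_{i,s}$ ($1\le s\le d_i-1$) with $z_{i,s}=z_{i,d_i-s}$, $z_{i,0}=z_{i,d_i}=1$. Regard $y_1,\dots,y_n$ and the $z_{i,s}$ as formal variables; $\mathrm{Trop}(\mathbf y,\mathbf z)$ is the free abelian multiplicative group they generate with $\oplus$ given by componentwise minimum of exponents. The $(\mathbf d,\mathbf z)$-mutation at $k$ acts on a skew-symmetrizable exchange matrix $B=(b_{ij})$ and $y$-variables by: $b'_{ij}=-b_{ij}$ if $i=k$ or $j=k$, else $b'_{ij}=b_{ij}+d_k([-b_{ik}]_+b_{kj}+b_{ik}[b_{kj}]_+)$; $y'_k=y_k^{-1}$, $y'_i=y_i(y_k^{[\varepsilon b_{ki}]_+})^{d_k}(\bigoplus_{s=0}^{d_k}z_{k,s}y_k^{\varepsilon s})^{-b_{ki}}$ ($i\neq k$), $\varepsilon\in\{\pm1\}$ (cluster variables also mutate, irrelevant here). $\mathbb T_n$ is the $n$-regular tree with edges labeled $1,\dots,n$, distinct labels at each vertex. A $(\mathbf d,\mathbf z)$-cluster pattern with principal coefficients assigns to each vertex $t$ a seed $(\mathbf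 x_t,\mathbf y_t,B_t)$, $\mathbf y_t=(y^t_1,\dots,y^t_n)\in\mathrm{Trop}(\mathbf y,\mathbf z)^n$, such that seeds at vertices joined by an edge labeled $k$ are related by the mutation at $k$, and the seed at a fixed initial vertex $t_0$ has $y$-variables the generators $y_1,\dots,y_n$ (initial cluster and skew-symmetrizable $B$ arbitrary). *)

theory Defs
  imports Main
begin

text \<open>Generators of Trop(y,z): the y_j and the frozen z_{i,s}. The identification
 z_{i,s} = z_{i,d_i-s} is built in by only using canonical indices 1 <= s <= d_i - s
 (see zvar); z_{i,0} = z_{i,d_i} = 1.\<close>
datatype gen = Yg nat | Zg nat nat

text \<open>An element of the tropical semifield Trop(y,z) is represented by its exponent
 vector: multiplication is addition of exponents, semifield addition is componentwise
 minimum, inversion is negation.\<close>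
type_synonym trop = "gen \<Rightarrow> int"

definition tmul :: "trop \<Rightarrow> trop \<Rightarrow> trop" where
  "tmul a b = (\<lambda>g. a g + b g)"

definition tpow :: "trop \<Rightarrow> int \<Rightarrow> trop" where
  "tpow a m = (\<lambda>g. m * a g)"

definition tgen :: "gen \<Rightarrow> trop" where
  "tgen h = (\<lambda>g. if g = h then 1 else 0)"

definition tone :: trop where
  "tone = (\<lambda>g. 0)"

definition tsum :: "(nat \<Rightarrow> trop) \<Rightarrow> nat set \<Rightarrow> trop" where
  "tsum f S = (\<lambda>g. Min ((\<lambda>s. f s g) ` S))"

definition zvar :: "(nat \<Rightarrow> nat) \<Rightarrow> nat \<Rightarrow> nat \<Rightarrow> trop" where
  "zvar d i s = (if s = 0 \<or> s = d i then tone else tgen (Zg i (min s (d i - s))))"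

definition pos_part :: "int \<Rightarrow> int" where
  "pos_part a = max a 0"

definition mutB :: "(nat \<Rightarrow> nat) \<Rightarrow> nat \<Rightarrow> (nat \<Rightarrow> nat \<Rightarrow> int) \<Rightarrow> nat \<Rightarrow> nat \<Rightarrow> int" where
  "mutB d k B = (\<lambda>i j. if i = k \<or> j = k then - B i j
      else B i j + int (d k) * (pos_part (- B i k) * B k j + B i k * pos_part (B k j)))"

definition mutY :: "(nat \<Rightarrow> nat) \<Rightarrow> int \<Rightarrow> nat \<Rightarrow> (nat \<Rightarrow> nat \<Rightarrow> int) \<Rightarrow> (nat \<Rightarrow> trop) \<Rightarrow> nat \<Rightarrow> trop" where
  "mutY d eps k B y = (\<lambda>i. if i = k then tpow (y k) (-1)
      else tmul (tmul (y i) (tpow (tpow (y k) (pos_part (eps * B k i))) (int (d k))))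
                (tpow (tsum (\<lambda>s. tmul (zvar d k s) (tpow (y k) (eps * int s))) {0..d k}) (- B k i)))"

definition mut_related :: "nat \<Rightarrow> (nat \<Rightarrow> nat) \<Rightarrow> nat \<Rightarrow>
     (nat \<Rightarrow> nat \<Rightarrow> int) \<Rightarrow> (nat \<Rightarrow> trop) \<Rightarrow> (nat \<Rightarrow> nat \<Rightarrow> int) \<Rightarrow> (nat \<Rightarrow> trop) \<Rightarrow> bool" where
  "mut_related n d k B y B' y' \<longleftrightarrow>
     (\<forall>i<n. \<forall>j<n. B' i j = mutB d k B i j) \<and>
     (\<exists>eps \<in> {1, -1}. \<forall>i<n. y' i = mutY d eps k B y i)"

definition skew_symmetrizable :: "nat \<Rightarrow> (nat \<Rightarrow> nat \<Rightarrow> int) \<Rightarrow> bool" where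
  "skew_symmetrizable n B \<longleftrightarrow>
     (\<exists>r :: nat \<Rightarrow> int. (\<forall>i<n. r i > 0) \<and> (\<forall>i<n. \<forall>j<n. r i * B i j = - (r j * B j i)))"

text \<open>Vertices of the n-regular tree T_n: reduced words in the labels 0..n-1
 (no two equal consecutive letters). The edges are {w, w @ [k]} labelled k, for
 w @ [k] reduced.\<close>
definition tree_vertex :: "nat \<Rightarrow> nat list \<Rightarrow> bool" where
  "tree_vertex n w \<longleftrightarrow> set w \<subseteq> {..<n} \<and> (\<forall>i. Suc i < length w \<longrightarrow> w ! i \<noteq> w ! Suc i)"

text \<open>A (d,z)-cluster pattern with principal coefficients at the initial vertex t0
 (cluster variables are omitted, they do not influence the y-pattern).\<close>
definition principal_dz_pattern :: "nat \<Rightarrow> (nat \<Rightarrow> nat) \<Rightarrow> nat list \<Rightarrow>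
     (nat list \<Rightarrow> nat \<Rightarrow> nat \<Rightarrow> int) \<Rightarrow> (nat list \<Rightarrow> nat \<Rightarrow> trop) \<Rightarrow> bool" where
  "principal_dz_pattern n d t0 Bt Yt \<longleftrightarrow>
     (\<forall>i<n. d i > 0) \<and> tree_vertex n t0 \<and>
     skew_symmetrizable n (Bt t0) \<and>
     (\<forall>i<n. Yt t0 i = tgen (Yg i)) \<and>
     (\<forall>w k. tree_vertex n (w @ [k]) \<longrightarrow>
         mut_related n d k (Bt w) (Yt w) (Bt (w @ [k])) (Yt (w @ [k])))"

end

theory Submission
  imports Defs
begin

lemma tpow_app: "tpow a m g = m * a g"
  by (simp add: tpow_def)

lemma tmul_app: "tmul a b g = a g + b g"
  by (simp add: tmul_def)

lemma tsum_zero: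
  assumes "y k g = 0"
  shows "tsum (\<lambda>s. tmul (zvar d k s) (tpow (y k) (eps * int s))) {0..d k} g = 0"
proof -
  let ?S = "(\<lambda>s. tmul (zvar d k s) (tpow (y k) (eps * int s)) g) ` {0..d k}"
  have v: "tmul (zvar d k s) (tpow (y k) (eps * int s)) g = zvar d k s g" for s
    using assms by (simp add: tmul_app tpow_app)
  have nn: "zvar d k s g \<ge> 0" for s
    by (simp add: zvar_def tone_def tgen_def)
  have z0: "zvar d k 0 g = 0" by (simp add: zvar_def tone_def)
  have fin: "finite ?S" by simp
  have "tmul (zvar d k 0) (tpow (y k) (eps * int 0)) g \<in> ?S"
    by (rule imageI) simp
  hence mem: "0 \<in> ?S" using z0 v[of 0] by simp
  have ge: "\<forall>x\<in>?S. 0 \<le> x" using v nn by auto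
  have "Min ?S = 0"
  proof (rule Min_eqI[OF fin])
    fix x assume "x \<in> ?S" thus "0 \<le> x" using ge by blast
  next
    show "0 \<in> ?S" by (rule mem)
  qed
  thus ?thesis by (simp add: tsum_def)
qed

lemma mutY_other:
  assumes "y k g = 0" "i \<noteq> k"
  shows "mutY d eps k B y i g = y i g"
proof -
  have "mutY d eps k B y i = tmul (tmul (y i) (tpow (tpow (y k) (pos_part (eps * B k i))) (int (d k))))
                (tpow (tsum (\<lambda>s. tmul (zvar d k s) (tpow (y k) (eps * int s))) {0..d k}) (- B k i))"
    using assms(2) unfolding mutY_def by simp
  hence "mutY d eps k B y i g = y i g + int (d k) * (pos_part (eps * B k i) * y k g)
          + (- B k i) * tsum (\<lambda>s. tmul (zvar d k s) (tpow (y k) (eps * int s))) {0..d k} g"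
    by (simp only: tmul_app tpow_app)
  thus ?thesis using tsum_zero[of y k g d eps, OF assms(1)] assms(1) by simp
qed

lemma mutY_k: "mutY d eps k B y k g = - y k g"
  unfolding mutY_def by (simp add: tpow_app)

lemma mut_step:
  assumes "mut_related n d k B y B' y'" "k < n"
  shows "(\<forall>i<n. y i g = 0) \<longleftrightarrow> (\<forall>i<n. y' i g = 0)"
proof -
  obtain eps where e: "\<forall>i<n. y' i = mutY d eps k B y i"
    using assms(1) unfolding mut_related_def by blast
  have "y' k = mutY d eps k B y k" using e assms(2) by blast
  hence yk: "y' k g = - y k g" by (simp only: mutY_k)
  have oth: "y' i g = y i g" if "y k g = 0" "i < n" for i
  proof (cases "i = k")
    case True thus ?thesis using yk that by simp
  next
    case False
    have "y' i = mutY d eps k B y i" using e that by blast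
    thus ?thesis using mutY_other[of y k g i d eps B, OF that(1) False] by simp
  qed
  show ?thesis
  proof
    assume h: "\<forall>i<n. y i g = 0"
    have k0: "y k g = 0" using h assms(2) by blast
    show "\<forall>i<n. y' i g = 0"
    proof (intro allI impI)
      fix i assume "i < n"
      thus "y' i g = 0" using oth[OF k0] h by metis
    qed
  next
    assume h: "\<forall>i<n. y' i g = 0"
    have "y' k g = 0" using h assms(2) by blast
    hence k0: "y k g = 0" using yk by linarith
    show "\<forall>i<n. y i g = 0"
    proof (intro allI impI)
      fix i assume "i < n"
      thus "y i g = 0" using oth[OF k0] h by metis
    qed
  qed
qed

lemma tree_vertex_snoc:
  assumes "tree_vertex n (w @ [k])"
  shows "tree_vertex n w \<and> k < n"
proof -
  have a: "set w \<subseteq> {..<n}" "k < n" using assms unfolding tree_vertex_def by auto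
  have b: "w ! i \<noteq> w ! Suc i" if "Suc i < length w" for i
  proof -
    have "Suc i < length (w @ [k])" using that by simp
    hence "(w @ [k]) ! i \<noteq> (w @ [k]) ! Suc i" using assms unfolding tree_vertex_def by blast
    moreover have "(w @ [k]) ! i = w ! i" "(w @ [k]) ! Suc i = w ! Suc i"
      using that by (simp_all add: nth_append)
    ultimately show ?thesis by simp
  qed
  show ?thesis using a b unfolding tree_vertex_def by blast
qed

lemma all_vertices:
  assumes "principal_dz_pattern n d t0 Bt Yt" "tree_vertex n w"
  shows "(\<forall>i<n. Yt w i g = 0) \<longleftrightarrow> (\<forall>i<n. Yt [] i g = 0)"
  using assms(2)
proof (induction w rule: rev_induct)
  case Nil then show ?case by simp
next
  case (snoc k w)
  have tv: "tree_vertex n w" "k < n" using tree_vertex_snoc[OF snoc.prems] by auto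
  have mr: "mut_related n d k (Bt w) (Yt w) (Bt (w @ [k])) (Yt (w @ [k]))"
    using assms(1) snoc.prems unfolding principal_dz_pattern_def by blast
  have e1: "(\<forall>i<n. Yt w i g = 0) \<longleftrightarrow> (\<forall>i<n. Yt (w @ [k]) i g = 0)"
    by (rule mut_step[OF mr tv(2)])
  show ?case using e1 snoc.IH[OF tv(1)] by (rule trans[OF sym])
qed

theorem mainTheorem5:
  assumes "principal_dz_pattern n d t0 Bt Yt"
      and "tree_vertex n t"
      and "i < n"
  shows "\<forall>g. Yt t i g \<noteq> 0 \<longrightarrow> (\<exists>j<n. g = Yg j)"
proof (intro allI impI)
  fix g assume nz: "Yt t i g \<noteq> 0"
  show "\<exists>j<n. g = Yg j"
  proof (rule ccontr)
    assume bad: "\<not> (\<exists>j<n. g = Yg j)"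
    have "\<forall>i<n. Yt t0 i g = 0"
      using assms(1) bad unfolding principal_dz_pattern_def
      by (auto simp: tgen_def)
    moreover have t0v: "tree_vertex n t0" using assms(1) unfolding principal_dz_pattern_def by blast
    ultimately have "\<forall>i<n. Yt [] i g = 0" using all_vertices[OF assms(1) t0v] by simp
    hence "\<forall>i<n. Yt t i g = 0" using all_vertices[OF assms(1) assms(2)] by simp
    thus False using nz assms(3) by simp
  qed
qed

end
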